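(* Let $q\in(0,1)$, let $\alpha,p,j\ge0$ be integers, and let $b_n=q^n[n+\alpha+1]_q+q^{n+\alpha}[n]_q$ and $\lambda_n=q^{2n+\alpha-1}[n]_q[n+\alpha]_q$. Then $$\sum_{\omega\in\mathrm{Mot}_{p,j,j}}\mathrm{wt}_{b,\lambda}(\omega)=\sum_{M\in M^{(\alpha)}_{p,j}(p)}q^{\mathrm{cr}(M)}.$$
   Context: $[n]_q=\frac{1-q^n}{1-q}$. Motzkin paths: a Motzkin path is a sequence $(s_0,\dots,s_n)$ of points $s_i=(x_i,y_i)\in\mathbb{Z}^2$ with all $y_i\ge0$ such that each step $(s_i,s_{i+1})$ is an East step ($+(1,0)$), a North-East step ($+(1,1)$) or a South-East step ($+(1,-1)$); the step has height $k$ if $y_i=k$. $\mathrm{Mot}_{n,k,l}$ is the set of Motzkin paths from $(0,k)$ to $(n,l)$. An East step of height $k$ has weight $b_k$, a North-East step weight $1$, a South-East step of height $k$ weight $\lambda_k$; $\mathrm{wt}_{b,\lambda}(\omega)$ is the product of the step weights. Bipartite matchings: for integers $n,j,\alpha\ge0$, let $T_-=\{-\alpha-j,\dots,-1\}$, $T_+=\{1,\dots,n\}$ (top row), $B_-=\{-\tilde j,\dots,-\tilde 1\}$, $B_+=\{\tilde1,\dots,\tilde n\}$ (bottom row; $\tilde m$ is a formal copy of the integer $m$, and bottom vertices are compared via these integers). A bipartite matching is a set partition of $T_-\cup T_+\cup B_-\cup B_+$ into singletons (isolated vertices) and blocks $\{a,\tilde b\}$ with $a$ top, $\tilde b$ bottom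 (edges, written $(a,\tilde b)$). $M^{(\alpha)}_{n,j}$ is the set of such matchings with no edge between $T_-$ and $B_-$; $M^{(\alpha)}_{n,j}(l)$ its subset with exactly $l$ edges. The crossing number $\mathrm{cr}(M)$ is the total number of: (C1) unordered pairs of edges $(a,\tilde b),(c,\tilde d)$ with $a<c$ and $d<b$; (C2) pairs of an edge $(a,\tilde b)$ and an isolated top vertex $c$ with $c<a$; (C3) pairs of an edge $(a,\tilde b)$ and an isolated bottom vertex $\tilde d$ with $d<b$. *)

theory Defs
  imports Complex_Main
begin

definition qint :: "real \<Rightarrow> nat \<Rightarrow> real" where
  "qint q n = (1 - q ^ n) / (1 - q)"

definition is_step :: "int \<times> int \<Rightarrow> int \<times> int \<Rightarrow> bool" where
  "is_step s t \<longleftrightarrow> t = (fst s + 1, snd s) \<or> t = (fst s + 1, snd s + 1) \<or> t = (fst s + 1, snd s - 1)"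

definition Mot :: "nat \<Rightarrow> nat \<Rightarrow> nat \<Rightarrow> (int \<times> int) list set" where
  "Mot n k l = {ss. length ss = n + 1 \<and> ss ! 0 = (0, int k) \<and> ss ! n = (int n, int l)
      \<and> (\<forall>i\<le>n. snd (ss ! i) \<ge> 0) \<and> (\<forall>i<n. is_step (ss ! i) (ss ! Suc i))}"

definition step_wt :: "(nat \<Rightarrow> real) \<Rightarrow> (nat \<Rightarrow> real) \<Rightarrow> int \<times> int \<Rightarrow> int \<times> int \<Rightarrow> real" where
  "step_wt b lam s t =
     (if snd t = snd s then b (nat (snd s))
      else if snd t = snd s + 1 then 1
      else lam (nat (snd s)))"

definition wt :: "(nat \<Rightarrow> real) \<Rightarrow> (nat \<Rightarrow> real) \<Rightarrow> (int \<times> int) list \<Rightarrow> real" where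
  "wt b lam ss = (\<Prod>i<length ss - 1. step_wt b lam (ss ! i) (ss ! Suc i))"

text \<open>A matching (set partition into
  singletons and top-bottom pairs) is encoded by its set of edges (a, b), a top,
  b bottom, with every vertex in at most one edge; the remaining vertices are the
  isolated ones.\<close>
definition top_verts :: "nat \<Rightarrow> nat \<Rightarrow> nat \<Rightarrow> int set" where
  "top_verts \<alpha> n j = {- int \<alpha> - int j .. -1} \<union> {1 .. int n}"

definition bot_verts :: "nat \<Rightarrow> nat \<Rightarrow> int set" where
  "bot_verts n j = {- int j .. -1} \<union> {1 .. int n}"

definition matchings :: "nat \<Rightarrow> nat \<Rightarrow> nat \<Rightarrow> (int \<times> int) set set" where
  "matchings \<alpha> n j = {E. E \<subseteq> top_verts \<alpha> n j \<times> bot_verts n j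
      \<and> (\<forall>a b b'. (a, b) \<in> E \<longrightarrow> (a, b') \<in> E \<longrightarrow> b = b')
      \<and> (\<forall>a a' b. (a, b) \<in> E \<longrightarrow> (a', b) \<in> E \<longrightarrow> a = a')
      \<and> (\<forall>(a, b)\<in>E. \<not> (a < 0 \<and> b < 0))}"

definition matchings_l :: "nat \<Rightarrow> nat \<Rightarrow> nat \<Rightarrow> nat \<Rightarrow> (int \<times> int) set set" where
  "matchings_l \<alpha> n j l = {E \<in> matchings \<alpha> n j. card E = l}"

definition iso_top :: "nat \<Rightarrow> nat \<Rightarrow> nat \<Rightarrow> (int \<times> int) set \<Rightarrow> int set" where
  "iso_top \<alpha> n j E = top_verts \<alpha> n j - fst ` E"

definition iso_bot :: "nat \<Rightarrow> nat \<Rightarrow> (int \<times> int) set \<Rightarrow> int set" where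
  "iso_bot n j E = bot_verts n j - snd ` E"

definition cr :: "nat \<Rightarrow> nat \<Rightarrow> nat \<Rightarrow> (int \<times> int) set \<Rightarrow> nat" where
  "cr \<alpha> n j E =
     card {(e, f). e \<in> E \<and> f \<in> E \<and> fst e < fst f \<and> snd f < snd e}
   + card {(e, c). e \<in> E \<and> c \<in> iso_top \<alpha> n j E \<and> c < fst e}
   + card {(e, d). e \<in> E \<and> d \<in> iso_bot n j E \<and> d < snd e}"

end

theory Submission
  imports Defs
begin


definition ind :: "bool \<Rightarrow> int" where "ind P = (if P then 1 else 0)"

definition C1 :: "(int \<times> int) set \<Rightarrow> int" where
  "C1 M = (\<Sum>e\<in>M. \<Sum>f\<in>M. ind (fst e < fst f \<and> snd f < snd e))"
definition C2 :: "(int \<times> int) set \<Rightarrow> int set \<Rightarrow> int" where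
  "C2 M S = (\<Sum>e\<in>M. \<Sum>c\<in>S. ind (c < fst e))"
definition C3 :: "(int \<times> int) set \<Rightarrow> int set \<Rightarrow> int" where
  "C3 M S = (\<Sum>e\<in>M. \<Sum>d\<in>S. ind (d < snd e))"

lemma ind_simps[simp]: "ind True = 1" "ind False = 0" by (simp_all add: ind_def)

lemma card_ind: "finite A \<Longrightarrow> int (card {x\<in>A. P x}) = (\<Sum>x\<in>A. ind (P x))"
  by (induction A rule: finite_induct) (auto simp: ind_def insert_compr[symmetric] Collect_conj_eq)

lemma card_pairs:
  assumes "finite A" "finite B"
  shows "int (card {(x, y). x \<in> A \<and> y \<in> B \<and> P x y}) = (\<Sum>x\<in>A. \<Sum>y\<in>B. ind (P x y))"
proof -
  have "{(x, y). x \<in> A \<and> y \<in> B \<and> P x y} = Sigma A (\<lambda>x. {y\<in>B. P x y})" by auto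
  then have "card {(x, y). x \<in> A \<and> y \<in> B \<and> P x y} = (\<Sum>x\<in>A. card {y\<in>B. P x y})"
    using assms by simp
  then show ?thesis using assms by (simp add: card_ind)
qed

lemma cr_eq:
  assumes "finite M"
  shows "int (cr \<alpha> n j M) = C1 M + C2 M (iso_top \<alpha> n j M) + C3 M (iso_bot n j M)"
proof -
  have f1: "finite (iso_top \<alpha> n j M)" "finite (iso_bot n j M)"
    by (auto simp: iso_top_def iso_bot_def top_verts_def bot_verts_def)
  have a: "{(e, f). e \<in> M \<and> f \<in> M \<and> fst e < fst f \<and> snd f < snd e}
     = {(e, f). e \<in> M \<and> f \<in> M \<and> (fst e < fst f \<and> snd f < snd e)}" by simp
  show ?thesis
    unfolding cr_def C1_def C2_def C3_def of_nat_add
    using card_pairs[OF assms assms, of "\<lambda>e f. fst e < fst f \<and> snd f < snd e"]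
      card_pairs[OF assms f1(1), of "\<lambda>e c. c < fst e"]
      card_pairs[OF assms f1(2), of "\<lambda>e c. c < snd e"]
    by simp
qed

lemma C1_insert:
  assumes "finite M" "x \<notin> M"
  shows "C1 (insert x M) = C1 M + (\<Sum>f\<in>M. ind (fst x < fst f \<and> snd f < snd x))
     + (\<Sum>e\<in>M. ind (fst e < fst x \<and> snd x < snd e))"
  using assms by (simp add: C1_def sum.distrib ind_def)

lemma C2_insert:
  assumes "finite M" "x \<notin> M"
  shows "C2 (insert x M) S = C2 M S + (\<Sum>c\<in>S. ind (c < fst x))"
  using assms by (simp add: C2_def)

lemma C3_insert:
  assumes "finite M" "x \<notin> M"
  shows "C3 (insert x M) S = C3 M S + (\<Sum>c\<in>S. ind (c < snd x))"
  using assms by (simp add: C3_def)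

lemma C2_insert2:
  assumes "finite S" "c \<notin> S"
  shows "C2 M (insert c S) = C2 M S + (\<Sum>e\<in>M. ind (c < fst e))"
  using assms by (simp add: C2_def sum.distrib)

lemma C3_insert2:
  assumes "finite S" "c \<notin> S"
  shows "C3 M (insert c S) = C3 M S + (\<Sum>e\<in>M. ind (c < snd e))"
  using assms by (simp add: C3_def sum.distrib)

lemma C2_remove2:
  assumes "finite S" "c \<in> S"
  shows "C2 M (S - {c}) = C2 M S - (\<Sum>e\<in>M. ind (c < fst e))"
  using C2_insert2[of "S - {c}" c M] assms by (simp add: insert_absorb)

lemma C3_remove2:
  assumes "finite S" "c \<in> S"
  shows "C3 M (S - {c}) = C3 M S - (\<Sum>e\<in>M. ind (c < snd e))"
  using C3_insert2[of "S - {c}" c M] assms by (simp add: insert_absorb)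

lemma sum_ind_false: "(\<And>x. x \<in> A \<Longrightarrow> \<not> P x) \<Longrightarrow> (\<Sum>x\<in>A. ind (P x)) = 0"
  by (simp add: ind_def)

lemma sum_ind_true: "(\<And>x. x \<in> A \<Longrightarrow> P x) \<Longrightarrow> (\<Sum>x\<in>A. ind (P x)) = int (card A)"
  by (simp add: ind_def)

lemma qint_Suc: "q \<noteq> 1 \<Longrightarrow> qint q (Suc n) = qint q n + q ^ n"
  by (simp add: qint_def field_simps)

lemma qsum_rank:
  fixes S :: "int set"
  assumes "finite S" "q \<noteq> 1"
  shows "(\<Sum>a\<in>S. q ^ card {c\<in>S. c < a}) = qint q (card S)"
  using assms(1)
proof (induction S rule: finite_linorder_max_induct)
  case empty then show ?case by (simp add: qint_def)
next
  case (insert b A)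
  have bA: "b \<notin> A" using insert by auto
  have 1: "\<And>a. a \<in> A \<Longrightarrow> {c \<in> insert b A. c < a} = {c\<in>A. c < a}" using insert by auto
  have 2: "{c \<in> insert b A. c < b} = A" using insert by auto
  have "(\<Sum>a\<in>insert b A. q ^ card {c\<in>insert b A. c < a}) = q ^ card A + (\<Sum>a\<in>A. q ^ card {c\<in>A. c < a})"
  proof -
    have "(\<Sum>a\<in>A. q ^ card {c\<in>insert b A. c < a}) = (\<Sum>a\<in>A. q ^ card {c\<in>A. c < a})"
      using 1 by (intro sum.cong) auto
    moreover have "card {c \<in> insert b A. c < b} = card A" using 2 by simp
    ultimately show ?thesis using insert bA by (simp only: sum.insert) simp
  qed
  then show ?case using insert bA assms(2) by (simp add: qint_Suc)
qed



definition nb :: "nat \<Rightarrow> nat set" where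
  "nb k = {k, Suc k} \<union> (if 0 < k then {k - 1} else {})"

definition MA :: "nat \<Rightarrow> nat \<Rightarrow> (int \<times> int) list set" where
  "MA n j = {ss. \<exists>l. ss \<in> Mot n j l}"

definition endh :: "(int \<times> int) list \<Rightarrow> nat" where
  "endh ss = nat (snd (last ss))"

lemma Mot_fst:
  assumes "ss \<in> Mot n j l" "i \<le> n"
  shows "fst (ss ! i) = int i"
  using assms(2)
proof (induction i)
  case 0 then show ?case using assms(1) by (simp add: Mot_def)
next
  case (Suc i)
  then have "is_step (ss ! i) (ss ! Suc i)" using assms(1) by (simp add: Mot_def)
  then show ?case using Suc by (auto simp: is_step_def)
qed

lemma Mot_last: "ss \<in> Mot n j l \<Longrightarrow> last ss = (int n, int l)"
proof -
  assume a: "ss \<in> Mot n j l"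
  then have "length ss = Suc n" "ss ! n = (int n, int l)" by (auto simp: Mot_def)
  then show ?thesis by (subst last_conv_nth) auto
qed

lemma Mot_endh: "ss \<in> Mot n j l \<Longrightarrow> endh ss = l"
  by (simp add: Mot_last endh_def)

lemma Mot_snoc:
  assumes "ss \<in> Mot n j l" "l' \<in> nb l"
  shows "ss @ [(int (Suc n), int l')] \<in> Mot (Suc n) j l'"
proof -
  have len: "length ss = Suc n" using assms(1) by (simp add: Mot_def)
  have n: "ss ! n = (int n, int l)" using assms(1) by (simp add: Mot_def)
  have st: "is_step (ss ! n) (int (Suc n), int l')"
    using assms(2) by (auto simp: n is_step_def nb_def split: if_splits)
  show ?thesis
    unfolding Mot_def
  proof (intro CollectI conjI allI impI)
    show "length (ss @ [(int (Suc n), int l')]) = Suc n + 1" using len by simp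
    show "(ss @ [(int (Suc n), int l')]) ! 0 = (0, int j)" using assms(1) len by (simp add: nth_append Mot_def)
    show "(ss @ [(int (Suc n), int l')]) ! Suc n = (int (Suc n), int l')" using len by (simp add: nth_append)
    fix i
    show "i \<le> Suc n \<Longrightarrow> 0 \<le> snd ((ss @ [(int (Suc n), int l')]) ! i)"
      using assms(1) len by (auto simp: nth_append Mot_def)
    show "i < Suc n \<Longrightarrow> is_step ((ss @ [(int (Suc n), int l')]) ! i) ((ss @ [(int (Suc n), int l')]) ! Suc i)"
      using assms(1) len st by (auto simp: nth_append Mot_def less_Suc_eq)
  qed
qed

lemma Mot_butlast:
  assumes "ss \<in> Mot (Suc n) j l'"
  shows "\<exists>l. butlast ss \<in> Mot n j l \<and> l' \<in> nb l \<and> ss = butlast ss @ [(int (Suc n), int l')]"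
proof -
  have len: "length ss = Suc (Suc n)" using assms by (simp add: Mot_def)
  define l where "l = nat (snd (ss ! n))"
  have fn: "fst (ss ! n) = int n" using Mot_fst[OF assms, of n] by simp
  have sn: "snd (ss ! n) = int l" using assms by (simp add: l_def Mot_def)
  have last: "ss ! Suc n = (int (Suc n), int l')" using assms by (simp add: Mot_def)
  have st: "is_step (ss ! n) (ss ! Suc n)" using assms unfolding Mot_def by blast
  have eq: "ss = butlast ss @ [(int (Suc n), int l')]"
    using len last by (metis append_butlast_last_id last_conv_nth diff_Suc_1 list.size(3) nat.simps(3))
  have bl: "butlast ss ! i = ss ! i" if "i \<le> n" for i
    using that len by (simp add: nth_butlast)
  have "butlast ss \<in> Mot n j l"
    unfolding Mot_def using assms len fn sn
    by (auto simp: bl Mot_def prod_eq_iff)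
  moreover have "l' \<in> nb l"
    using st fn sn last by (auto simp: is_step_def nb_def)
  ultimately show ?thesis using eq by blast
qed

lemma wt_snoc:
  assumes "ss \<noteq> []"
  shows "wt b lam (ss @ [t]) = wt b lam ss * step_wt b lam (last ss) t"
proof -
  obtain m where m: "length ss = Suc m" using assms by (cases ss) auto
  have "wt b lam (ss @ [t]) = (\<Prod>i<Suc m. step_wt b lam ((ss @ [t]) ! i) ((ss @ [t]) ! Suc i))"
    by (simp add: wt_def m)
  also have "\<dots> = (\<Prod>i<m. step_wt b lam (ss ! i) (ss ! Suc i)) * step_wt b lam (ss ! m) t"
    using m by (simp add: nth_append)
  also have "\<dots> = wt b lam ss * step_wt b lam (last ss) t"
    using m assms by (simp add: wt_def last_conv_nth)
  finally show ?thesis .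
qed

lemma MA_Suc:
  "MA (Suc n) j = (\<lambda>(ss, l'). ss @ [(int (Suc n), int l')]) ` Sigma (MA n j) (\<lambda>ss. nb (endh ss))"
proof (intro equalityI subsetI)
  fix ss assume "ss \<in> MA (Suc n) j"
  then obtain l' where "ss \<in> Mot (Suc n) j l'" by (auto simp: MA_def)
  from Mot_butlast[OF this] obtain l where "butlast ss \<in> Mot n j l" "l' \<in> nb l"
    "ss = butlast ss @ [(int (Suc n), int l')]" by blast
  then show "ss \<in> (\<lambda>(ss, l'). ss @ [(int (Suc n), int l')]) ` Sigma (MA n j) (\<lambda>ss. nb (endh ss))"
    by (auto simp: MA_def Mot_endh intro!: image_eqI[where x="(butlast ss, l')"])
next
  fix ss assume "ss \<in> (\<lambda>(ss, l'). ss @ [(int (Suc n), int l')]) ` Sigma (MA n j) (\<lambda>ss. nb (endh ss))"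
  then obtain s0 l' where "s0 \<in> MA n j" "l' \<in> nb (endh s0)" "ss = s0 @ [(int (Suc n), int l')]"
    by auto
  moreover obtain l where "s0 \<in> Mot n j l" using \<open>s0 \<in> MA n j\<close> by (auto simp: MA_def)
  ultimately have "ss \<in> Mot (Suc n) j l'"
    using Mot_snoc[of s0 n j l l'] Mot_endh[of s0 n j l] by simp
  then show "ss \<in> MA (Suc n) j" by (auto simp: MA_def)
qed

lemma MA_0: "MA 0 j = {[(0, int j)]}"
  by (auto simp: MA_def Mot_def length_Suc_conv)

lemma finite_MA: "finite (MA n j)"
proof (induction n)
  case 0 then show ?case by (simp add: MA_0)
next
  case (Suc n)
  have "finite (Sigma (MA n j) (\<lambda>ss. nb (endh ss)))"
    using Suc by (intro finite_SigmaI) (auto simp: nb_def)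
  then show ?case by (simp add: MA_Suc)
qed

lemma MA_nonempty: "ss \<in> MA n j \<Longrightarrow> ss \<noteq> []"
  by (auto simp: MA_def Mot_def)

lemma MA_last: "ss \<in> MA n j \<Longrightarrow> last ss = (int n, int (endh ss))"
  by (auto simp: MA_def Mot_last Mot_endh)

lemma nat_1_plus: "nat (1 + int m) = Suc m" by simp

lemma MA_step:
  fixes g :: "nat \<Rightarrow> real"
  shows "(\<Sum>ss\<in>MA (Suc n) j. wt b lam ss * g (endh ss))
    = (\<Sum>ss\<in>MA n j. wt b lam ss * (g (Suc (endh ss)) + b (endh ss) * g (endh ss)
         + (if 0 < endh ss then lam (endh ss) * g (endh ss - 1) else 0)))"
proof -
  let ?f = "\<lambda>(ss, l'). ss @ [(int (Suc n), int l')]"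
  have inj: "inj_on ?f (Sigma (MA n j) (\<lambda>ss. nb (endh ss)))"
    by (auto simp: inj_on_def)
  have "(\<Sum>ss\<in>MA (Suc n) j. wt b lam ss * g (endh ss))
      = (\<Sum>x\<in>Sigma (MA n j) (\<lambda>ss. nb (endh ss)). wt b lam (?f x) * g (endh (?f x)))"
    unfolding MA_Suc by (subst sum.reindex[OF inj]) (simp add: comp_def)
  also have "\<dots> = (\<Sum>ss\<in>MA n j. \<Sum>l'\<in>nb (endh ss). wt b lam ss * step_wt b lam (int n, int (endh ss)) (int (Suc n), int l') * g l')"
  proof -
    have "(\<Sum>ss\<in>MA n j. \<Sum>l'\<in>nb (endh ss). wt b lam ss * step_wt b lam (int n, int (endh ss)) (int (Suc n), int l') * g l')
      = (\<Sum>(ss,l')\<in>Sigma (MA n j) (\<lambda>ss. nb (endh ss)). wt b lam ss * step_wt b lam (int n, int (endh ss)) (int (Suc n), int l') * g l')"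
      by (rule sum.Sigma) (auto simp: finite_MA nb_def)
    also have "\<dots> = (\<Sum>x\<in>Sigma (MA n j) (\<lambda>ss. nb (endh ss)). wt b lam (?f x) * g (endh (?f x)))"
    proof (intro sum.cong refl)
      fix x assume "x \<in> Sigma (MA n j) (\<lambda>ss. nb (endh ss))"
      then obtain ss l' where x: "x = (ss, l')" "ss \<in> MA n j" by auto
      have "endh (?f x) = l'" by (simp add: x endh_def)
      moreover have "wt b lam (?f x) = wt b lam ss * step_wt b lam (int n, int (endh ss)) (int (Suc n), int l')"
        using x MA_nonempty[OF x(2)] MA_last[OF x(2)] by (simp add: wt_snoc)
      ultimately show "(case x of (ss, l') \<Rightarrow> wt b lam ss * step_wt b lam (int n, int (endh ss)) (int (Suc n), int l') * g l') = wt b lam (?f x) * g (endh (?f x))"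
        using x by simp
    qed
    finally show ?thesis by simp
  qed
  also have "\<dots> = (\<Sum>ss\<in>MA n j. wt b lam ss * (g (Suc (endh ss)) + b (endh ss) * g (endh ss)
         + (if 0 < endh ss then lam (endh ss) * g (endh ss - 1) else 0)))"
  proof (intro sum.cong refl)
    fix ss
    show "(\<Sum>l'\<in>nb (endh ss). wt b lam ss * step_wt b lam (int n, int (endh ss)) (int (Suc n), int l') * g l')
      = wt b lam ss * (g (Suc (endh ss)) + b (endh ss) * g (endh ss)
         + (if 0 < endh ss then lam (endh ss) * g (endh ss - 1) else 0))"
      by (cases "endh ss") (auto simp: nb_def step_wt_def algebra_simps of_nat_diff nat_1_plus)
  qed
  finally show ?thesis .
qed



lemma top_Suc: "top_verts \<alpha> (Suc n) j = insert (int (Suc n)) (top_verts \<alpha> n j)"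
  by (auto simp: top_verts_def)
lemma bot_Suc: "bot_verts (Suc n) j = insert (int (Suc n)) (bot_verts n j)"
  by (auto simp: bot_verts_def)
lemma top_fin[simp]: "finite (top_verts \<alpha> n j)" by (simp add: top_verts_def)
lemma bot_fin[simp]: "finite (bot_verts n j)" by (simp add: bot_verts_def)
lemma top_bnd: "c \<in> top_verts \<alpha> n j \<Longrightarrow> c < int (Suc n)" by (auto simp: top_verts_def)
lemma bot_bnd: "c \<in> bot_verts n j \<Longrightarrow> c < int (Suc n)" by (auto simp: bot_verts_def)

lemma card_top: "card (top_verts \<alpha> n j) = \<alpha> + j + n"
proof -
  have "card (top_verts \<alpha> n j) = card {- int \<alpha> - int j .. -1} + card {1 .. int n}"
    unfolding top_verts_def by (rule card_Un_disjoint) auto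
  then show ?thesis by simp
qed

lemma card_bot: "card (bot_verts n j) = j + n"
proof -
  have "card (bot_verts n j) = card {- int j .. -1} + card {1 .. int n}"
    unfolding bot_verts_def by (rule card_Un_disjoint) auto
  then show ?thesis by simp
qed

lemma match_sub: "M \<in> matchings \<alpha> n j \<Longrightarrow> M \<subseteq> top_verts \<alpha> n j \<times> bot_verts n j"
  by (simp add: matchings_def)

lemma match_fin: "M \<in> matchings \<alpha> n j \<Longrightarrow> finite M"
  using match_sub finite_subset by (metis finite_SigmaI top_fin bot_fin)

lemma finite_matchings: "finite (matchings \<alpha> n j)"
proof -
  have "matchings \<alpha> n j \<subseteq> Pow (top_verts \<alpha> n j \<times> bot_verts n j)" by (auto simp: matchings_def)
  then show ?thesis by (rule finite_subset) simp
qed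

lemma card_fst: "M \<in> matchings \<alpha> n j \<Longrightarrow> card (fst ` M) = card M"
  by (rule card_image) (auto simp: inj_on_def matchings_def)
lemma card_snd: "M \<in> matchings \<alpha> n j \<Longrightarrow> card (snd ` M) = card M"
  by (rule card_image) (auto simp: inj_on_def matchings_def)

lemma card_iso_top: "M \<in> matchings \<alpha> n j \<Longrightarrow> card (iso_top \<alpha> n j M) = \<alpha> + j + n - card M"
  unfolding iso_top_def using match_sub[of M \<alpha> n j] card_fst[of M \<alpha> n j]
  by (subst card_Diff_subset) (auto simp: card_top match_fin)

lemma card_iso_bot: "M \<in> matchings \<alpha> n j \<Longrightarrow> card (iso_bot n j M) = j + n - card M"
  unfolding iso_bot_def using match_sub[of M \<alpha> n j] card_snd[of M \<alpha> n j]
  by (subst card_Diff_subset) (auto simp: card_bot match_fin)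

lemma card_M_le: "M \<in> matchings \<alpha> n j \<Longrightarrow> card M \<le> j + n"
proof -
  assume M: "M \<in> matchings \<alpha> n j"
  have "card (snd ` M) \<le> card (bot_verts n j)"
    using match_sub[OF M] by (intro card_mono) auto
  then show ?thesis using card_snd[OF M] card_bot by simp
qed

lemma card_iso_rel: "M \<in> matchings \<alpha> n j \<Longrightarrow> card (iso_top \<alpha> n j M) = card (iso_bot n j M) + \<alpha>"
  using card_iso_top card_iso_bot card_M_le by fastforce

lemma iso_fin[simp]: "finite (iso_top \<alpha> n j M)" "finite (iso_bot n j M)"
  by (auto simp: iso_top_def iso_bot_def)



context
  fixes \<alpha> n j :: nat and M' :: "(int \<times> int) set"
  assumes M': "M' \<in> matchings \<alpha> n j"
begin

abbreviation "NN \<equiv> int (Suc n)"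
abbreviation "IT \<equiv> iso_top \<alpha> n j M'"
abbreviation "IB \<equiv> iso_bot n j M'"

lemma Mfin: "finite M'" using match_fin[OF M'] .

lemma Mb: "e \<in> M' \<Longrightarrow> fst e < NN \<and> snd e < NN \<and> fst e \<in> top_verts \<alpha> n j \<and> snd e \<in> bot_verts n j"
  using match_sub[OF M'] top_bnd bot_bnd by (metis (no_types, lifting) mem_Sigma_iff prod.collapse subsetD)

lemma Mp1: "(x, y) \<in> M' \<Longrightarrow> x < NN" using Mb[of "(x, y)"] by simp
lemma Mp2: "(x, y) \<in> M' \<Longrightarrow> y < NN" using Mb[of "(x, y)"] by simp

lemma NM1: "(NN, y) \<notin> M'" using Mb[of "(NN, y)"] by auto
lemma NM2: "(x, NN) \<notin> M'" using Mb[of "(x, NN)"] by auto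

lemma ITb: "c \<in> IT \<Longrightarrow> c < NN \<and> c \<in> top_verts \<alpha> n j \<and> c \<notin> fst ` M'"
  using top_bnd[of c \<alpha> n j] by (auto simp: iso_top_def)
lemma IBb: "c \<in> IB \<Longrightarrow> c < NN \<and> c \<in> bot_verts n j \<and> c \<notin> snd ` M'"
  using bot_bnd[of c n j] by (auto simp: iso_bot_def)

lemma NIT: "NN \<notin> IT" using ITb[of NN] by auto
lemma NIB: "NN \<notin> IB" using IBb[of NN] by auto
lemma NT: "NN \<notin> top_verts \<alpha> n j" using top_bnd[of NN \<alpha> n j] by auto
lemma NB: "NN \<notin> bot_verts n j" using bot_bnd[of NN n j] by auto
lemma NfM: "NN \<notin> fst ` M'" "NN \<notin> snd ` M'" using NM1 NM2 by force+

lemma it1: "iso_top \<alpha> (Suc n) j M' = insert NN IT"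
  unfolding iso_top_def top_Suc using NfM by auto
lemma ib1: "iso_bot (Suc n) j M' = insert NN IB"
  unfolding iso_bot_def bot_Suc using NfM by auto
lemma it2: "iso_top \<alpha> (Suc n) j (insert (NN, NN) M') = IT"
  unfolding iso_top_def top_Suc using NfM NT by auto
lemma ib2: "iso_bot (Suc n) j (insert (NN, NN) M') = IB"
  unfolding iso_bot_def bot_Suc using NfM NB by auto

lemma it3: "a \<in> IT \<Longrightarrow> iso_top \<alpha> (Suc n) j (insert (a, NN) M') = insert NN (IT - {a})"
proof -
  assume a: "a \<in> IT"
  have "a \<noteq> NN" using ITb[OF a] by simp
  then show ?thesis unfolding iso_top_def top_Suc using NfM by auto
qed
lemma ib3: "a \<in> IT \<Longrightarrow> iso_bot (Suc n) j (insert (a, NN) M') = IB"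
  unfolding iso_bot_def bot_Suc using NfM NB by auto
lemma it4: "b \<in> IB \<Longrightarrow> iso_top \<alpha> (Suc n) j (insert (NN, b) M') = IT"
  unfolding iso_top_def top_Suc using NfM NT by auto
lemma ib4: "b \<in> IB \<Longrightarrow> iso_bot (Suc n) j (insert (NN, b) M') = insert NN (IB - {b})"
proof -
  assume b: "b \<in> IB"
  have "b \<noteq> NN" using IBb[OF b] by simp
  then show ?thesis unfolding iso_bot_def bot_Suc using NfM by auto
qed
lemma it5: "a \<in> IT \<Longrightarrow> b \<in> IB \<Longrightarrow> iso_top \<alpha> (Suc n) j (insert (a, NN) (insert (NN, b) M')) = IT - {a}"
  unfolding iso_top_def top_Suc using NfM NT by auto
lemma ib5: "a \<in> IT \<Longrightarrow> b \<in> IB \<Longrightarrow> iso_bot (Suc n) j (insert (a, NN) (insert (NN, b) M')) = IB - {b}"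
  unfolding iso_bot_def bot_Suc using NfM NB by auto

lemma cr0: "int (cr \<alpha> n j M') = C1 M' + C2 M' IT + C3 M' IB"
  using cr_eq[OF Mfin] .

lemma sum_lt_N: "(\<Sum>e\<in>M'. ind (NN < fst e)) = 0" "(\<Sum>e\<in>M'. ind (NN < snd e)) = 0"
  by (auto intro!: sum_ind_false dest: Mp1 Mp2)

lemma cr1: "cr \<alpha> (Suc n) j M' = cr \<alpha> n j M'"
proof -
  have "int (cr \<alpha> (Suc n) j M') = C1 M' + C2 M' (insert NN IT) + C3 M' (insert NN IB)"
    using cr_eq[OF Mfin] it1 ib1 by simp
  also have "\<dots> = int (cr \<alpha> n j M')"
    using cr0 C2_insert2[of IT NN M'] C3_insert2[of IB NN M'] NIT NIB sum_lt_N by simp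
  finally show ?thesis by simp
qed

lemma cr2: "cr \<alpha> (Suc n) j (insert (NN, NN) M') = cr \<alpha> n j M' + card IT + card IB"
proof -
  have fin: "finite (insert (NN, NN) M')" using Mfin by simp
  have "int (cr \<alpha> (Suc n) j (insert (NN, NN) M')) = C1 (insert (NN, NN) M') + C2 (insert (NN, NN) M') IT + C3 (insert (NN, NN) M') IB"
    using cr_eq[OF fin] it2 ib2 by simp
  also have "\<dots> = C1 M' + C2 M' IT + C3 M' IB + int (card IT) + int (card IB)"
  proof -
    have "(\<Sum>f\<in>M'. ind (NN < fst f \<and> snd f < NN)) = 0" "(\<Sum>e\<in>M'. ind (fst e < NN \<and> NN < snd e)) = 0"
      by (auto intro!: sum_ind_false dest: Mp1 Mp2)
    moreover have "(\<Sum>c\<in>IT. ind (c < NN)) = int (card IT)" "(\<Sum>c\<in>IB. ind (c < NN)) = int (card IB)"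
      using ITb IBb by (auto intro!: sum_ind_true)
    ultimately show ?thesis
      using C1_insert[OF Mfin NM1] C2_insert[OF Mfin NM1] C3_insert[OF Mfin NM1] by simp
  qed
  finally show ?thesis using cr0 by simp
qed

lemma cr3:
  assumes a: "a \<in> IT"
  shows "cr \<alpha> (Suc n) j (insert (a, NN) M') = cr \<alpha> n j M' + card {c\<in>IT. c < a} + card IB"
proof -
  have fin: "finite (insert (a, NN) M')" using Mfin by simp
  have aN: "a < NN" using ITb[OF a] by simp
  have "int (cr \<alpha> (Suc n) j (insert (a, NN) M')) = C1 (insert (a, NN) M') + C2 (insert (a, NN) M') (insert NN (IT - {a})) + C3 (insert (a, NN) M') IB"
    using cr_eq[OF fin] it3[OF a] ib3[OF a] by simp
  also have "\<dots> = C1 M' + C2 M' IT + C3 M' IB + int (card {c\<in>IT. c < a}) + int (card IB)"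
  proof -
    have s1: "(\<Sum>f\<in>M'. ind (a < fst f \<and> snd f < NN)) = (\<Sum>f\<in>M'. ind (a < fst f))"
      by (intro sum.cong) (auto dest: Mp1 Mp2)
    have s2: "(\<Sum>e\<in>M'. ind (fst e < a \<and> NN < snd e)) = 0"
      by (auto intro!: sum_ind_false dest: Mp1 Mp2)
    have s3: "(\<Sum>c\<in>IB. ind (c < NN)) = int (card IB)"
      using IBb by (auto intro!: sum_ind_true)
    have s4: "C2 M' (insert NN (IT - {a})) = C2 M' IT - (\<Sum>e\<in>M'. ind (a < fst e))"
      using C2_insert2[of "IT - {a}" NN M'] C2_remove2[of IT a M'] a sum_lt_N NIT by simp
    have s5: "(\<Sum>c\<in>insert NN (IT - {a}). ind (c < a)) = int (card {c\<in>IT. c < a})"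
      using aN a NIT by (simp add: sum_diff1 card_ind ind_def)
    show ?thesis
      using C1_insert[OF Mfin NM2] C2_insert[OF Mfin NM2] C3_insert[OF Mfin NM2] s1 s2 s3 s4 s5 by simp
  qed
  finally show ?thesis using cr0 by simp
qed

lemma cr4:
  assumes b: "b \<in> IB"
  shows "cr \<alpha> (Suc n) j (insert (NN, b) M') = cr \<alpha> n j M' + card {d\<in>IB. d < b} + card IT"
proof -
  have fin: "finite (insert (NN, b) M')" using Mfin by simp
  have bN: "b < NN" using IBb[OF b] by simp
  have "int (cr \<alpha> (Suc n) j (insert (NN, b) M')) = C1 (insert (NN, b) M') + C2 (insert (NN, b) M') IT + C3 (insert (NN, b) M') (insert NN (IB - {b}))"
    using cr_eq[OF fin] it4[OF b] ib4[OF b] by simp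
  also have "\<dots> = C1 M' + C2 M' IT + C3 M' IB + int (card {d\<in>IB. d < b}) + int (card IT)"
  proof -
    have s1: "(\<Sum>e\<in>M'. ind (fst e < NN \<and> b < snd e)) = (\<Sum>e\<in>M'. ind (b < snd e))"
      by (intro sum.cong) (auto dest: Mp1 Mp2)
    have s2: "(\<Sum>f\<in>M'. ind (NN < fst f \<and> snd f < b)) = 0"
      by (auto intro!: sum_ind_false dest: Mp1 Mp2)
    have s3: "(\<Sum>c\<in>IT. ind (c < NN)) = int (card IT)"
      using ITb by (auto intro!: sum_ind_true)
    have s4: "C3 M' (insert NN (IB - {b})) = C3 M' IB - (\<Sum>e\<in>M'. ind (b < snd e))"
      using C3_insert2[of "IB - {b}" NN M'] C3_remove2[of IB b M'] b sum_lt_N NIB by simp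
    have s5: "(\<Sum>c\<in>insert NN (IB - {b}). ind (c < b)) = int (card {d\<in>IB. d < b})"
      using bN b NIB by (simp add: sum_diff1 card_ind ind_def)
    show ?thesis
      using C1_insert[OF Mfin NM1] C2_insert[OF Mfin NM1] C3_insert[OF Mfin NM1] s1 s2 s3 s4 s5 by simp
  qed
  finally show ?thesis using cr0 by simp
qed

lemma cr5:
  assumes a: "a \<in> IT" and b: "b \<in> IB"
  shows "cr \<alpha> (Suc n) j (insert (a, NN) (insert (NN, b) M')) + 1
     = cr \<alpha> n j M' + card {c\<in>IT. c < a} + card {d\<in>IB. d < b} + card IT + card IB"
proof -
  let ?M1 = "insert (NN, b) M'"
  have fin1: "finite ?M1" using Mfin by simp
  have fin: "finite (insert (a, NN) ?M1)" using Mfin by simp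
  have aN: "a < NN" using ITb[OF a] by simp
  have bN: "b < NN" using IBb[OF b] by simp
  have nin: "(a, NN) \<notin> ?M1" using aN NM2 by auto
  have "int (cr \<alpha> (Suc n) j (insert (a, NN) ?M1)) = C1 (insert (a, NN) ?M1) + C2 (insert (a, NN) ?M1) (IT - {a}) + C3 (insert (a, NN) ?M1) (IB - {b})"
    using cr_eq[OF fin] it5[OF a b] ib5[OF a b] by simp
  also have "\<dots> = C1 M' + C2 M' IT + C3 M' IB + int (card {c\<in>IT. c < a}) + int (card {d\<in>IB. d < b}) + int (card IT) + int (card IB) - 1"
  proof -
    have s1: "(\<Sum>e\<in>M'. ind (fst e < NN \<and> b < snd e)) = (\<Sum>e\<in>M'. ind (b < snd e))"
      by (intro sum.cong) (auto dest: Mp1 Mp2)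
    have s2: "(\<Sum>f\<in>M'. ind (NN < fst f \<and> snd f < b)) = 0"
      by (auto intro!: sum_ind_false dest: Mp1 Mp2)
    have s1': "(\<Sum>f\<in>M'. ind (a < fst f \<and> snd f < NN)) = (\<Sum>f\<in>M'. ind (a < fst f))"
      by (intro sum.cong) (auto dest: Mp1 Mp2)
    have s2': "(\<Sum>e\<in>M'. ind (fst e < a \<and> NN < snd e)) = 0"
      by (auto intro!: sum_ind_false dest: Mp1 Mp2)
    have c1: "C1 (insert (a, NN) ?M1) = C1 M' + (\<Sum>e\<in>M'. ind (b < snd e)) + (\<Sum>f\<in>M'. ind (a < fst f)) + 1"
      using C1_insert[OF fin1 nin] C1_insert[OF Mfin NM1] s1 s2 s1' s2' aN bN NM1 Mfin
      by (simp add: ind_def)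
    have c2: "C2 (insert (a, NN) ?M1) (IT - {a}) = C2 M' IT - (\<Sum>e\<in>M'. ind (a < fst e)) + int (card IT) - 1 + int (card {c\<in>IT. c < a})"
    proof -
      have "(\<Sum>c\<in>IT - {a}. ind (c < NN)) = int (card IT) - 1"
        using a sum_ind_true[of "IT - {a}" "\<lambda>c. c < NN"] ITb card_gt_0_iff[of IT] iso_fin(1)[of \<alpha> n j M'] by (auto simp: card_Diff_singleton of_nat_diff)
      moreover have "(\<Sum>c\<in>IT - {a}. ind (c < a)) = int (card {c\<in>IT. c < a})"
        using a by (simp add: sum_diff1 card_ind ind_def)
      ultimately show ?thesis
        using C2_insert[OF fin1 nin] C2_insert[OF Mfin NM1] C2_remove2[of IT a M'] a by simp
    qed
    have c3: "C3 (insert (a, NN) ?M1) (IB - {b}) = C3 M' IB - (\<Sum>e\<in>M'. ind (b < snd e)) + int (card {d\<in>IB. d < b}) + int (card IB) - 1"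
    proof -
      have "(\<Sum>c\<in>IB - {b}. ind (c < NN)) = int (card IB) - 1"
        using b sum_ind_true[of "IB - {b}" "\<lambda>c. c < NN"] IBb card_gt_0_iff[of IB] iso_fin(2)[of n j M'] by (auto simp: card_Diff_singleton of_nat_diff)
      moreover have "(\<Sum>c\<in>IB - {b}. ind (c < b)) = int (card {d\<in>IB. d < b})"
        using b by (simp add: sum_diff1 card_ind ind_def)
      ultimately show ?thesis
        using C3_insert[OF fin1 nin] C3_insert[OF Mfin NM1] C3_remove2[of IB b M'] b by simp
    qed
    show ?thesis using c1 c2 c3 by simp
  qed
  finally show ?thesis using cr0 by simp
qed

end



definition restr :: "nat \<Rightarrow> (int \<times> int) set \<Rightarrow> (int \<times> int) set" where
  "restr n M = {e\<in>M. fst e \<noteq> int (Suc n) \<and> snd e \<noteq> int (Suc n)}"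

lemma restr_in:
  assumes M: "M \<in> matchings \<alpha> (Suc n) j"
  shows "restr n M \<in> matchings \<alpha> n j"
proof -
  have "M \<subseteq> top_verts \<alpha> (Suc n) j \<times> bot_verts (Suc n) j" using M by (simp add: matchings_def)
  then have "restr n M \<subseteq> top_verts \<alpha> n j \<times> bot_verts n j"
    unfolding restr_def top_Suc bot_Suc by auto
  then show ?thesis using M unfolding matchings_def restr_def by auto
qed

context
  fixes \<alpha> n j :: nat and M' :: "(int \<times> int) set"
  assumes M': "M' \<in> matchings \<alpha> n j"
begin

lemma M'sub: "M' \<subseteq> top_verts \<alpha> n j \<times> bot_verts n j" using M' by (simp add: matchings_def)
lemma M'u1: "(a, b) \<in> M' \<Longrightarrow> (a, b') \<in> M' \<Longrightarrow> b = b'" using M' by (simp add: matchings_def)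
lemma M'u2: "(a, b) \<in> M' \<Longrightarrow> (a', b) \<in> M' \<Longrightarrow> a = a'" using M' by (simp add: matchings_def)
lemma M'neg: "(a, b) \<in> M' \<Longrightarrow> \<not> (a < 0 \<and> b < 0)" using M' by (auto simp: matchings_def)

lemmas F = NM1[OF M'] NM2[OF M'] ITb[OF M'] IBb[OF M'] NIT[OF M'] NIB[OF M'] NT NB

lemma restr_M': "restr n M' = M'"
  using F unfolding restr_def by auto

lemma in1: "M' \<in> matchings \<alpha> (Suc n) j"
  using M' M'sub unfolding matchings_def top_Suc bot_Suc by auto

lemma in2: "insert (int (Suc n), int (Suc n)) M' \<in> matchings \<alpha> (Suc n) j"
  using M' M'sub F unfolding matchings_def top_Suc bot_Suc by auto

lemma in3:
  assumes a: "a \<in> iso_top \<alpha> n j M'"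
  shows "insert (a, int (Suc n)) M' \<in> matchings \<alpha> (Suc n) j"
proof -
  have a1: "a < int (Suc n)" "a \<in> top_verts \<alpha> n j" "\<And>y. (a, y) \<notin> M'"
    using ITb[OF M' a] by force+
  have n2: "\<And>x. (x, int (Suc n)) \<notin> M'" using NM2[OF M'] .
  show ?thesis
    using M'sub M'u1 M'u2 M'neg a1 n2 unfolding matchings_def top_Suc bot_Suc by auto
qed

lemma in4:
  assumes b: "b \<in> iso_bot n j M'"
  shows "insert (int (Suc n), b) M' \<in> matchings \<alpha> (Suc n) j"
proof -
  have b1: "b < int (Suc n)" "b \<in> bot_verts n j" "\<And>x. (x, b) \<notin> M'"
    using IBb[OF M' b] by force+
  have n1: "\<And>y. (int (Suc n), y) \<notin> M'" using NM1[OF M'] .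
  show ?thesis
    using M'sub M'u1 M'u2 M'neg b1 n1 unfolding matchings_def top_Suc bot_Suc by auto
qed

lemma in5:
  assumes a: "a \<in> iso_top \<alpha> n j M'" and b: "b \<in> iso_bot n j M'"
  shows "insert (a, int (Suc n)) (insert (int (Suc n), b) M') \<in> matchings \<alpha> (Suc n) j"
proof -
  have a1: "a < int (Suc n)" "a \<in> top_verts \<alpha> n j" "\<And>y. (a, y) \<notin> M'"
    using ITb[OF M' a] by force+
  have b1: "b < int (Suc n)" "b \<in> bot_verts n j" "\<And>x. (x, b) \<notin> M'"
    using IBb[OF M' b] by force+
  have n1: "\<And>y. (int (Suc n), y) \<notin> M'" using NM1[OF M'] .
  have n2: "\<And>x. (x, int (Suc n)) \<notin> M'" using NM2[OF M'] .
  show ?thesis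
    using M'sub M'u1 M'u2 M'neg a1 b1 n1 n2 unfolding matchings_def top_Suc bot_Suc by auto
qed

definition "P3 = (\<lambda>a. insert (a, int (Suc n)) M') ` iso_top \<alpha> n j M'"
definition "P4 = (\<lambda>b. insert (int (Suc n), b) M') ` iso_bot n j M'"
definition "P5 = (\<lambda>(a, b). insert (a, int (Suc n)) (insert (int (Suc n), b) M')) ` (iso_top \<alpha> n j M' \<times> iso_bot n j M')"

lemma fiber_eq:
  "{M \<in> matchings \<alpha> (Suc n) j. restr n M = M'} = {M'} \<union> {insert (int (Suc n), int (Suc n)) M'} \<union> P3 \<union> P4 \<union> P5"
proof (intro equalityI subsetI)
  fix M assume "M \<in> {M \<in> matchings \<alpha> (Suc n) j. restr n M = M'}"
  then have M: "M \<in> matchings \<alpha> (Suc n) j" and r: "restr n M = M'" by auto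
  define N where "N = int (Suc n)"
  have u1: "\<And>a b b'. (a, b) \<in> M \<Longrightarrow> (a, b') \<in> M \<Longrightarrow> b = b'" using M by (simp add: matchings_def)
  have u2: "\<And>a a' b. (a, b) \<in> M \<Longrightarrow> (a', b) \<in> M \<Longrightarrow> a = a'" using M by (simp add: matchings_def)
  have sub: "M \<subseteq> insert N (top_verts \<alpha> n j) \<times> insert N (bot_verts n j)"
    using M by (simp add: matchings_def top_Suc bot_Suc N_def)
  have Mdec: "\<And>x y. (x, y) \<in> M \<longleftrightarrow> (x, y) \<in> M' \<or> ((x, y) \<in> M \<and> (x = N \<or> y = N))"
    using r unfolding restr_def N_def by auto
  have M'M: "M' \<subseteq> M" using r unfolding restr_def by auto
  have M'N: "\<And>x y. (x, y) \<in> M' \<Longrightarrow> x \<noteq> N \<and> y \<noteq> N" using r unfolding restr_def N_def by auto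
  show "M \<in> {M'} \<union> {insert (int (Suc n), int (Suc n)) M'} \<union> P3 \<union> P4 \<union> P5"
  proof (cases "(N, N) \<in> M")
    case True
    have "M = insert (N, N) M'"
    proof (intro equalityI subsetI)
      fix e assume e: "e \<in> M"
      obtain x y where xy: "e = (x, y)" by force
      show "e \<in> insert (N, N) M'" using Mdec[of x y] e xy u1[OF True, of y] u2[OF True, of x] by auto
    qed (use True M'M in auto)
    then show ?thesis by (simp add: N_def)
  next
    case nNN: False
    have itop: "a \<in> iso_top \<alpha> n j M'" if "(a, N) \<in> M" for a
    proof -
      have "a \<noteq> N" using that nNN by auto
      moreover have "a \<in> insert N (top_verts \<alpha> n j)" using sub that by auto
      moreover have "a \<notin> fst ` M'"
      proof
        assume "a \<in> fst ` M'"
        then obtain y where "(a, y) \<in> M'" by force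
        then show False using M'M M'N u1[OF that, of y] by auto
      qed
      ultimately show ?thesis by (auto simp: iso_top_def)
    qed
    have ibot: "b \<in> iso_bot n j M'" if "(N, b) \<in> M" for b
    proof -
      have "b \<noteq> N" using that nNN by auto
      moreover have "b \<in> insert N (bot_verts n j)" using sub that by auto
      moreover have "b \<notin> snd ` M'"
      proof
        assume "b \<in> snd ` M'"
        then obtain x where "(x, b) \<in> M'" by force
        then show False using M'M M'N u2[OF that, of x] by auto
      qed
      ultimately show ?thesis by (auto simp: iso_bot_def)
    qed
    show ?thesis
    proof (cases "\<exists>a. (a, N) \<in> M")
      case True
      then obtain a where a: "(a, N) \<in> M" by blast
      show ?thesis
      proof (cases "\<exists>b. (N, b) \<in> M")
        case True
        then obtain b where b: "(N, b) \<in> M" by blast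
        have "M = insert (a, N) (insert (N, b) M')"
        proof (intro equalityI subsetI)
          fix e assume e: "e \<in> M"
          obtain x y where xy: "e = (x, y)" by force
          show "e \<in> insert (a, N) (insert (N, b) M')"
            using Mdec[of x y] e xy u1[OF b, of y] u2[OF a, of x] by auto
        qed (use a b M'M in auto)
        then have "M \<in> P5" unfolding P5_def N_def using itop[OF a] ibot[OF b] by auto
        then show ?thesis by blast
      next
        case False
        have "M = insert (a, N) M'"
        proof (intro equalityI subsetI)
          fix e assume e: "e \<in> M"
          obtain x y where xy: "e = (x, y)" by force
          show "e \<in> insert (a, N) M'"
            using Mdec[of x y] e xy False u2[OF a, of x] by auto
        qed (use a M'M in auto)
        then have "M \<in> P3" unfolding P3_def N_def using itop[OF a] by auto
        then show ?thesis by blast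
      qed
    next
      case nA: False
      show ?thesis
      proof (cases "\<exists>b. (N, b) \<in> M")
        case True
        then obtain b where b: "(N, b) \<in> M" by blast
        have "M = insert (N, b) M'"
        proof (intro equalityI subsetI)
          fix e assume e: "e \<in> M"
          obtain x y where xy: "e = (x, y)" by force
          show "e \<in> insert (N, b) M'"
            using Mdec[of x y] e xy nA u1[OF b, of y] by auto
        qed (use b M'M in auto)
        then have "M \<in> P4" unfolding P4_def N_def using ibot[OF b] by auto
        then show ?thesis by blast
      next
        case False
        have "M = M'"
        proof (intro equalityI subsetI)
          fix e assume e: "e \<in> M"
          obtain x y where xy: "e = (x, y)" by force
          show "e \<in> M'" using Mdec[of x y] e xy nA False by auto
        qed (use M'M in auto)
        then show ?thesis by blast
      qed
    qed
  qed
next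
  fix M assume "M \<in> {M'} \<union> {insert (int (Suc n), int (Suc n)) M'} \<union> P3 \<union> P4 \<union> P5"
  then show "M \<in> {M \<in> matchings \<alpha> (Suc n) j. restr n M = M'}"
    using in1 in2 in3 in4 in5 restr_M' F unfolding P3_def P4_def P5_def restr_def
    by auto
qed

end



context
  fixes \<alpha> n j :: nat and M' :: "(int \<times> int) set"
  assumes M': "M' \<in> matchings \<alpha> n j"
begin

lemma fiber_sum:
  fixes G :: "(int \<times> int) set \<Rightarrow> real"
  shows "(\<Sum>M\<in>{M \<in> matchings \<alpha> (Suc n) j. restr n M = M'}. G M)
    = G M' + G (insert (int (Suc n), int (Suc n)) M')
      + (\<Sum>a\<in>iso_top \<alpha> n j M'. G (insert (a, int (Suc n)) M'))
      + (\<Sum>b\<in>iso_bot n j M'. G (insert (int (Suc n), b) M'))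
      + (\<Sum>(a, b)\<in>iso_top \<alpha> n j M' \<times> iso_bot n j M'. G (insert (a, int (Suc n)) (insert (int (Suc n), b) M')))"
proof -
  let ?N = "int (Suc n)"
  let ?IT = "iso_top \<alpha> n j M'" and ?IB = "iso_bot n j M'"
  have n1: "\<And>y. (?N, y) \<notin> M'" using NM1[OF M'] .
  have n2: "\<And>x. (x, ?N) \<notin> M'" using NM2[OF M'] .
  have it: "\<And>a. a \<in> ?IT \<Longrightarrow> a < ?N" using ITb[OF M'] by blast
  have ib: "\<And>b. b \<in> ?IB \<Longrightarrow> b < ?N" using IBb[OF M'] by blast
  have fIT: "finite ?IT" and fIB: "finite ?IB" by simp_all
  have fP3: "finite (P3 \<alpha> n j M')" "finite (P4 n j M')" "finite (P5 \<alpha> n j M')"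
    by (simp_all add: P3_def[OF M'] P4_def[OF M'] P5_def[OF M'])
  have inj3: "inj_on (\<lambda>a. insert (a, ?N) M') ?IT"
    using n2 by (auto simp: inj_on_def insert_eq_iff)
  have inj4: "inj_on (\<lambda>b. insert (?N, b) M') ?IB"
    using n1 by (auto simp: inj_on_def insert_eq_iff)
  have inj5: "inj_on (\<lambda>(a, b). insert (a, ?N) (insert (?N, b) M')) (?IT \<times> ?IB)"
  proof (rule inj_onI)
    fix x y assume x: "x \<in> ?IT \<times> ?IB" and y: "y \<in> ?IT \<times> ?IB"
      and eq: "(\<lambda>(a, b). insert (a, ?N) (insert (?N, b) M')) x = (\<lambda>(a, b). insert (a, ?N) (insert (?N, b) M')) y"
    obtain a b a' b' where xy: "x = (a, b)" "y = (a', b')" by force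
    have "a < ?N" "b < ?N" "a' < ?N" "b' < ?N" using x y xy it ib by auto
    moreover have "(a, ?N) \<in> insert (a', ?N) (insert (?N, b') M')" "(?N, b) \<in> insert (a', ?N) (insert (?N, b') M')"
      using eq xy by auto
    ultimately show "x = y" using xy n1 n2 by auto
  qed
  have d1: "insert (?N, ?N) M' \<noteq> M'" using n1 by auto
  have d2: "({M'} \<union> {insert (?N, ?N) M'}) \<inter> P3 \<alpha> n j M' = {}"
    unfolding P3_def[OF M'] using n1 n2 it by (auto simp: insert_eq_iff) (metis insertI1 less_irrefl)+
  have d3: "({M'} \<union> {insert (?N, ?N) M'} \<union> P3 \<alpha> n j M') \<inter> P4 n j M' = {}"
    unfolding P3_def[OF M'] P4_def[OF M'] using n1 n2 it ib by (auto simp: insert_eq_iff) (metis insertI1 insert_iff less_irrefl prod.inject)+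
  have d4: "({M'} \<union> {insert (?N, ?N) M'} \<union> P3 \<alpha> n j M' \<union> P4 n j M') \<inter> P5 \<alpha> n j M' = {}"
    unfolding P3_def[OF M'] P4_def[OF M'] P5_def[OF M'] using n1 n2 it ib by (auto simp: insert_eq_iff) (metis insertI1 insert_iff less_irrefl prod.inject)+
  have "(\<Sum>M\<in>{M \<in> matchings \<alpha> (Suc n) j. restr n M = M'}. G M)
     = (\<Sum>M\<in>{M'} \<union> {insert (?N, ?N) M'} \<union> P3 \<alpha> n j M' \<union> P4 n j M' \<union> P5 \<alpha> n j M'. G M)"
    using fiber_eq[OF M'] by simp
  also have "\<dots> = G M' + G (insert (?N, ?N) M') + sum G (P3 \<alpha> n j M') + sum G (P4 n j M') + sum G (P5 \<alpha> n j M')"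
    using d1 d2 d3 d4 fP3 by (simp add: sum.union_disjoint)
  also have "sum G (P3 \<alpha> n j M') = (\<Sum>a\<in>?IT. G (insert (a, ?N) M'))"
    unfolding P3_def[OF M'] using sum.reindex[OF inj3, of G] by (simp add: comp_def)
  also have "sum G (P4 n j M') = (\<Sum>b\<in>?IB. G (insert (?N, b) M'))"
    unfolding P4_def[OF M'] using sum.reindex[OF inj4, of G] by (simp add: comp_def)
  also have "sum G (P5 \<alpha> n j M') = (\<Sum>(a, b)\<in>?IT \<times> ?IB. G (insert (a, ?N) (insert (?N, b) M')))"
    unfolding P5_def[OF M'] using sum.reindex[OF inj5, of G] by (simp add: comp_def case_prod_beta)
  finally show ?thesis .
qed

end



lemma sum_prod_split:
  fixes K :: real
  shows "(\<Sum>(a, b)\<in>A \<times> B. K * (f a * h b)) = K * ((\<Sum>a\<in>A. f a) * (\<Sum>b\<in>B. h b))"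
proof -
  have "(\<Sum>(a, b)\<in>A \<times> B. K * (f a * h b)) = (\<Sum>a\<in>A. \<Sum>b\<in>B. K * (f a * h b))"
    by (rule sum.cartesian_product[symmetric])
  also have "\<dots> = K * ((\<Sum>a\<in>A. f a) * (\<Sum>b\<in>B. h b))"
    by (subst sum_product) (simp add: sum_distrib_left)
  finally show ?thesis .
qed

lemma fiber_val:
  fixes g :: "nat \<Rightarrow> real" and q :: real
  assumes M': "M' \<in> matchings \<alpha> n j" and q1: "q \<noteq> 1"
    and hb: "\<And>n. b n = q ^ n * qint q (n + \<alpha> + 1) + q ^ (n + \<alpha>) * qint q n"
    and hl: "\<And>n. lam n = q ^ (2 * n + \<alpha> - 1) * qint q n * qint q (n + \<alpha>)"
  shows "(\<Sum>M\<in>{M \<in> matchings \<alpha> (Suc n) j. restr n M = M'}. q ^ cr \<alpha> (Suc n) j M * g (card (iso_bot (Suc n) j M)))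
    = q ^ cr \<alpha> n j M' * (g (Suc (card (iso_bot n j M'))) + b (card (iso_bot n j M')) * g (card (iso_bot n j M'))
       + (if 0 < card (iso_bot n j M') then lam (card (iso_bot n j M')) * g (card (iso_bot n j M') - 1) else 0))"
proof -
  let ?N = "int (Suc n)"
  let ?IT = "iso_top \<alpha> n j M'" and ?IB = "iso_bot n j M'"
  define k where "k = card ?IB"
  define c where "c = cr \<alpha> n j M'"
  let ?G = "\<lambda>M. q ^ cr \<alpha> (Suc n) j M * g (card (iso_bot (Suc n) j M))"
  have cIT: "card ?IT = k + \<alpha>" using card_iso_rel[OF M'] k_def by simp
  have p1: "?G M' = q ^ c * g (Suc k)"
    using cr1[OF M'] ib1[OF M'] NIB[OF M'] by (simp add: c_def k_def)
  have p2: "?G (insert (?N, ?N) M') = q ^ (c + (k + \<alpha>) + k) * g k"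
    using cr2[OF M'] ib2[OF M'] cIT by (simp add: c_def k_def)
  have p3: "(\<Sum>a\<in>?IT. ?G (insert (a, ?N) M')) = q ^ (c + k) * qint q (k + \<alpha>) * g k"
  proof -
    have "(\<Sum>a\<in>?IT. ?G (insert (a, ?N) M')) = (\<Sum>a\<in>?IT. q ^ (c + k) * g k * q ^ card {x\<in>?IT. x < a})"
    proof (intro sum.cong refl)
      fix a assume a: "a \<in> ?IT"
      show "?G (insert (a, ?N) M') = q ^ (c + k) * g k * q ^ card {x\<in>?IT. x < a}"
        using cr3[OF M' a] ib3[OF M' a] by (simp add: c_def k_def power_add)
    qed
    also have "\<dots> = q ^ (c + k) * g k * qint q (k + \<alpha>)"
      by (simp add: sum_distrib_left[symmetric] qsum_rank q1 cIT)
    finally show ?thesis by simp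
  qed
  have p4: "(\<Sum>b\<in>?IB. ?G (insert (?N, b) M')) = q ^ (c + (k + \<alpha>)) * qint q k * g k"
  proof -
    have "(\<Sum>b\<in>?IB. ?G (insert (?N, b) M')) = (\<Sum>b\<in>?IB. q ^ (c + (k + \<alpha>)) * g k * q ^ card {x\<in>?IB. x < b})"
    proof (intro sum.cong refl)
      fix b assume b: "b \<in> ?IB"
      have "card (insert ?N (?IB - {b})) = k"
        using b NIB[OF M'] card_gt_0_iff[of ?IB] iso_fin(2)[of n j M'] by (auto simp: k_def card_Diff_singleton)
      then show "?G (insert (?N, b) M') = q ^ (c + (k + \<alpha>)) * g k * q ^ card {x\<in>?IB. x < b}"
        using b cr4[OF M' b] ib4[OF M' b] by (simp add: c_def cIT power_add)
    qed
    also have "\<dots> = q ^ (c + (k + \<alpha>)) * g k * qint q k"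
      by (simp add: sum_distrib_left[symmetric] qsum_rank q1 k_def)
    finally show ?thesis by simp
  qed
  have p5: "(\<Sum>(a, b)\<in>?IT \<times> ?IB. ?G (insert (a, ?N) (insert (?N, b) M')))
      = q ^ c * (if 0 < k then lam k * g (k - 1) else 0)"
  proof (cases "k = 0")
    case True
    then have "?IB = {}" using k_def by simp
    then show ?thesis using True by simp
  next
    case False
    have "(\<Sum>(a, b)\<in>?IT \<times> ?IB. ?G (insert (a, ?N) (insert (?N, b) M')))
        = (\<Sum>(a, b)\<in>?IT \<times> ?IB. (q ^ (c + (2 * k + \<alpha> - 1)) * g (k - 1)) * (q ^ card {x\<in>?IT. x < a} * q ^ card {x\<in>?IB. x < b}))"
    proof (intro sum.cong refl, clarify)
      fix a b assume a: "a \<in> ?IT" and b: "b \<in> ?IB"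
      have ck: "card (?IB - {b}) = k - 1"
        using b by (simp add: k_def card_Diff_singleton)
      have "cr \<alpha> (Suc n) j (insert (a, ?N) (insert (?N, b) M')) = c + card {x\<in>?IT. x < a} + card {x\<in>?IB. x < b} + (2 * k + \<alpha> - 1)"
      proof -
        have kpos: "0 < k" using False by simp
        have "cr \<alpha> (Suc n) j (insert (a, ?N) (insert (?N, b) M')) + 1 = c + card {x\<in>?IT. x < a} + card {x\<in>?IB. x < b} + (k + \<alpha>) + k"
          using cr5[OF M' a b] cIT unfolding c_def k_def by simp
        then show ?thesis using kpos by simp
      qed
      then show "?G (insert (a, ?N) (insert (?N, b) M')) = (q ^ (c + (2 * k + \<alpha> - 1)) * g (k - 1)) * (q ^ card {x\<in>?IT. x < a} * q ^ card {x\<in>?IB. x < b})"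
        using ck ib5[OF M' a b] by (simp add: power_add)
    qed
    also have "\<dots> = (q ^ (c + (2 * k + \<alpha> - 1)) * g (k - 1)) * ((\<Sum>a\<in>?IT. q ^ card {x\<in>?IT. x < a}) * (\<Sum>b\<in>?IB. q ^ card {x\<in>?IB. x < b}))"
      by (rule sum_prod_split)
    also have "\<dots> = (q ^ (c + (2 * k + \<alpha> - 1)) * g (k - 1)) * (qint q (k + \<alpha>) * qint q k)"
      by (simp add: qsum_rank q1 cIT k_def)
    also have "\<dots> = q ^ c * (lam k * g (k - 1))"
      by (simp only: power_add hl) (simp add: algebra_simps)
    finally show ?thesis using False by simp
  qed
  have qs: "qint q (k + \<alpha> + 1) = qint q (k + \<alpha>) + q ^ (k + \<alpha>)"
    using qint_Suc[OF q1, of "k + \<alpha>"] by simp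
  show ?thesis
    unfolding fiber_sum[OF M'] p1 p2 p3 p4 p5
    by (simp add: c_def[symmetric] k_def[symmetric] hb qint_Suc[OF q1] power_add algebra_simps)
qed



lemma match_step:
  fixes g :: "nat \<Rightarrow> real" and q :: real
  assumes q1: "q \<noteq> 1"
    and hb: "\<And>n. b n = q ^ n * qint q (n + \<alpha> + 1) + q ^ (n + \<alpha>) * qint q n"
    and hl: "\<And>n. lam n = q ^ (2 * n + \<alpha> - 1) * qint q n * qint q (n + \<alpha>)"
  shows "(\<Sum>M\<in>matchings \<alpha> (Suc n) j. q ^ cr \<alpha> (Suc n) j M * g (card (iso_bot (Suc n) j M)))
    = (\<Sum>M'\<in>matchings \<alpha> n j. q ^ cr \<alpha> n j M' * (g (Suc (card (iso_bot n j M'))) + b (card (iso_bot n j M')) * g (card (iso_bot n j M'))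
       + (if 0 < card (iso_bot n j M') then lam (card (iso_bot n j M')) * g (card (iso_bot n j M') - 1) else 0)))"
proof -
  have "(\<Sum>M\<in>matchings \<alpha> (Suc n) j. q ^ cr \<alpha> (Suc n) j M * g (card (iso_bot (Suc n) j M)))
     = (\<Sum>M'\<in>matchings \<alpha> n j. \<Sum>M\<in>{M \<in> matchings \<alpha> (Suc n) j. restr n M = M'}. q ^ cr \<alpha> (Suc n) j M * g (card (iso_bot (Suc n) j M)))"
    by (rule sum.group[symmetric]) (auto simp: finite_matchings restr_in)
  also have "\<dots> = (\<Sum>M'\<in>matchings \<alpha> n j. q ^ cr \<alpha> n j M' * (g (Suc (card (iso_bot n j M'))) + b (card (iso_bot n j M')) * g (card (iso_bot n j M'))
       + (if 0 < card (iso_bot n j M') then lam (card (iso_bot n j M')) * g (card (iso_bot n j M') - 1) else 0)))"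
    by (intro sum.cong refl fiber_val[OF _ q1 hb hl])
  finally show ?thesis .
qed

lemma matchings_0: "matchings \<alpha> 0 j = {{}}"
proof -
  have "E = {}" if "E \<in> matchings \<alpha> 0 j" for E
  proof -
    have "E \<subseteq> top_verts \<alpha> 0 j \<times> bot_verts 0 j" "\<forall>(a, b)\<in>E. \<not> (a < 0 \<and> b < 0)"
      using that by (auto simp: matchings_def)
    then show ?thesis by (force simp: top_verts_def bot_verts_def)
  qed
  moreover have "{} \<in> matchings \<alpha> 0 j" by (simp add: matchings_def)
  ultimately show ?thesis by blast
qed

lemma main:
  fixes g :: "nat \<Rightarrow> real" and q :: real
  assumes q1: "q \<noteq> 1"
    and hb: "\<And>n. b n = q ^ n * qint q (n + \<alpha> + 1) + q ^ (n + \<alpha>) * qint q n"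
    and hl: "\<And>n. lam n = q ^ (2 * n + \<alpha> - 1) * qint q n * qint q (n + \<alpha>)"
  shows "(\<Sum>M\<in>matchings \<alpha> n j. q ^ cr \<alpha> n j M * g (card (iso_bot n j M))) = (\<Sum>ss\<in>MA n j. wt b lam ss * g (endh ss))"
proof (induction n arbitrary: g)
  case 0
  have "cr \<alpha> 0 j {} = 0" by (simp add: cr_def)
  moreover have "card (iso_bot 0 j {}) = j" by (simp add: iso_bot_def card_bot)
  moreover have "wt b lam [(0, int j)] = 1" by (simp add: wt_def)
  moreover have "endh [(0, int j)] = j" by (simp add: endh_def)
  ultimately show ?case by (simp add: matchings_0 MA_0)
next
  case (Suc n)
  show ?case
    unfolding match_step[OF q1 hb hl] MA_step
    using Suc.IH[of "\<lambda>k. g (Suc k) + b k * g k + (if 0 < k then lam k * g (k - 1) else 0)"] by simp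
qed

theorem proposition2p4:
  fixes q :: real and \<alpha> p j :: nat and b lam :: "nat \<Rightarrow> real"
  assumes "0 < q" "q < 1"
    and "\<And>n. b n = q ^ n * qint q (n + \<alpha> + 1) + q ^ (n + \<alpha>) * qint q n"
    and "\<And>n. lam n = q ^ (2 * n + \<alpha> - 1) * qint q n * qint q (n + \<alpha>)"
  shows "(\<Sum>\<omega>\<in>Mot p j j. wt b lam \<omega>) = (\<Sum>M\<in>matchings_l \<alpha> p j p. q ^ cr \<alpha> p j M)"
proof -
  have q1: "q \<noteq> 1" using assms(2) by simp
  let ?g = "\<lambda>k::nat. if k = j then (1::real) else 0"
  have m: "Mot p j j = {ss \<in> MA p j. endh ss = j}"
    by (auto simp: MA_def Mot_endh) (metis Mot_endh)
  have l: "matchings_l \<alpha> p j p = {M \<in> matchings \<alpha> p j. card (iso_bot p j M) = j}"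
    using card_iso_bot card_M_le unfolding matchings_l_def by fastforce
  have "(\<Sum>\<omega>\<in>Mot p j j. wt b lam \<omega>) = (\<Sum>ss\<in>MA p j. wt b lam ss * ?g (endh ss))"
    unfolding m by (simp add: sum.inter_filter finite_MA if_distrib cong: if_cong)
  also have "\<dots> = (\<Sum>M\<in>matchings \<alpha> p j. q ^ cr \<alpha> p j M * ?g (card (iso_bot p j M)))"
    by (rule main[OF q1 assms(3) assms(4), symmetric])
  also have "\<dots> = (\<Sum>M\<in>matchings_l \<alpha> p j p. q ^ cr \<alpha> p j M)"
    unfolding l by (simp add: sum.inter_filter finite_matchings if_distrib cong: if_cong)
  finally show ?thesis .
qed

end
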